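(* For each $n$ let $0<p_n,q_n\le 1$ with $\frac{p_nq_n^2n}{\log n}\to\infty$ as $n\to\infty$, and let $\alpha^{(0)}$ be an initial configuration of $n$ cards. Let $\alpha^{(k)}$ be the configuration after $k$ moves of $\mathscr{B}(n,p_n,q_n)$, and let $N(\alpha^{(k)})$ denote its number of nonempty piles. Put $D=\lceil 14\log n/(p_nq_n)\rceil$ and $M=\lceil n^2/p_n\rceil$. Then \[ \frac{1}{q_nn}\max\{N(\alpha^{(D+1)}),\dotsc,N(\alpha^{(D+M)})\}\to 0\quad\text{in probability as } n\to\infty. \]
   Context: $\mathscr{B}(n,p,q)$ ($0<p,q\le 1$) is $p$-random $q$-proportion Bulgarian solitaire on $n$ identical cards distributed in piles. In one move, from each pile of size $h$ the top $\lceil qh\rceil$ cards are candidates; each candidate card is picked with probability $p$, independently of all other candidates; the picked cards are removed and together form one new pile. *)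

theory Defs
  imports "HOL-Probability.Probability"
begin

text \<open>A configuration is a list of pile sizes (order irrelevant; cards identical).
  For each pile of size h, the number of picked cards among the top ceil(q h)
  candidates is Binomial(ceil(q h), p), independently over piles.\<close>

fun bs_draws :: "real \<Rightarrow> real \<Rightarrow> nat list \<Rightarrow> nat list pmf" where
  "bs_draws p q [] = return_pmf []"
| "bs_draws p q (h # hs) =
     bind_pmf (binomial_pmf (nat \<lceil>q * real h\<rceil>) p)
       (\<lambda>x. map_pmf (\<lambda>xs. x # xs) (bs_draws p q hs))"

definition bs_step :: "real \<Rightarrow> real \<Rightarrow> nat list \<Rightarrow> nat list pmf" where
  "bs_step p q hs = map_pmf
     (\<lambda>xs. filter (\<lambda>h. 0 < h) (map2 (-) hs xs @ [sum_list xs])) (bs_draws p q hs)"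

fun bs_traj :: "real \<Rightarrow> real \<Rightarrow> nat list \<Rightarrow> nat \<Rightarrow> nat list list pmf" where
  "bs_traj p q a 0 = return_pmf [a]"
| "bs_traj p q a (Suc m) =
     bind_pmf (bs_traj p q a m)
       (\<lambda>ps. map_pmf (\<lambda>y. ps @ [y]) (bs_step p q (last ps)))"

definition num_piles :: "nat list \<Rightarrow> nat" where
  "num_piles hs = length (filter (\<lambda>h. 0 < h) hs)"

end

theory Submission
  imports Defs "HOL-Real_Asymp.Real_Asymp"
begin


fun psi :: "(nat \<Rightarrow> real) \<Rightarrow> nat list \<Rightarrow> real" where
  "psi w [] = 0"
| "psi w (h # hs) = real h * w (length hs) + psi w hs"

lemma psi_append1: "psi w (A @ [s]) = psi (\<lambda>j. w (Suc j)) A + real s * w 0"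
  by (induction A) auto

lemma psi_nonneg: "(\<And>j. 0 \<le> w j) \<Longrightarrow> 0 \<le> psi w xs"
  by (induction xs) auto

lemma psi_filter:
  assumes "\<And>j. 0 \<le> w j" "mono w"
  shows "psi w (filter P xs) \<le> psi w xs"
proof (induction xs)
  case (Cons h hs)
  have "w (length (filter P hs)) \<le> w (length hs)"
    using assms(2) by (simp add: monoD)
  hence "real h * w (length (filter P hs)) \<le> real h * w (length hs)"
    by (simp add: mult_left_mono)
  moreover have "0 \<le> real h * w (length hs)" using assms(1) by simp
  ultimately show ?case using Cons by auto
qed simp

lemma psi_mono_w:
  assumes "\<And>j. w j \<le> v j"
  shows "psi w xs \<le> psi v xs"
proof (induction xs)
  case (Cons h hs)
  then show ?case using assms by (simp add: add_mono mult_left_mono)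
qed simp

lemma psi_cmult: "psi (\<lambda>j. c * w j) xs = c * psi w xs"
  by (induction xs) (auto simp: algebra_simps)

lemma psi_le_sum:
  assumes "\<And>j. w j \<le> B"
  shows "psi w xs \<le> B * real (sum_list xs)"
proof (induction xs)
  case (Cons h hs)
  have "real h * w (length hs) \<le> B * real h"
    using assms[of "length hs"] by (metis mult.commute mult_left_mono of_nat_0_le_iff)
  then show ?case using Cons by (simp add: algebra_simps)
qed simp

lemma num_piles_Cons: "num_piles (h # hs) = (if 0 < h then Suc (num_piles hs) else num_piles hs)"
  by (simp add: num_piles_def)

lemma num_piles_le_length: "num_piles hs \<le> length hs"
  by (simp add: num_piles_def)

lemma num_piles_psi:
  assumes c: "1 \<le> c"
  shows "real (num_piles hs) \<le> real D + psi (\<lambda>j. c ^ min j D) hs / c ^ D"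
proof (induction hs)
  case Nil
  then show ?case by (simp add: num_piles_def)
next
  case (Cons h hs)
  have cD: "0 < c ^ D" using c by simp
  have pn: "0 \<le> psi (\<lambda>j. c ^ min j D) hs" using c by (intro psi_nonneg) simp
  show ?case
  proof (cases "D \<le> length hs")
    case True
    hence "psi (\<lambda>j. c ^ min j D) (h # hs) / c ^ D = real h + psi (\<lambda>j. c ^ min j D) hs / c ^ D"
      using cD by (simp add: add_divide_distrib min_def del: power_eq_0_iff)
    moreover have "real (num_piles (h # hs)) \<le> real h + real (num_piles hs)"
      by (simp add: num_piles_Cons)
    ultimately show ?thesis using Cons by linarith
  next
    case False
    have "num_piles (h # hs) \<le> D"
      using num_piles_le_length[of "h # hs"] False by simp
    moreover have "0 \<le> psi (\<lambda>j. c ^ min j D) (h # hs) / c ^ D"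
      using cD c by (intro divide_nonneg_pos psi_nonneg) auto
    ultimately show ?thesis by linarith
  qed
qed



lemma binomial_mean_nn:
  assumes p: "0 \<le> p" "p \<le> 1"
  shows "(\<integral>\<^sup>+x. ennreal (real x) \<partial>binomial_pmf n p) = ennreal (real n * p)"
proof (induction n)
  case 0
  then show ?case using p by (simp add: binomial_pmf_0)
next
  case (Suc n)
  have e1: "(\<integral>\<^sup>+k. ennreal (real (1 + k)) \<partial>binomial_pmf n p) = 1 + ennreal (real n * p)"
  proof -
    have "(\<integral>\<^sup>+k. ennreal (real (1 + k)) \<partial>binomial_pmf n p) = (\<integral>\<^sup>+k. 1 + ennreal (real k) \<partial>binomial_pmf n p)"
      by (intro nn_integral_cong) (simp add: ennreal_plus)
    also have "\<dots> = (\<integral>\<^sup>+k. 1 \<partial>binomial_pmf n p) + (\<integral>\<^sup>+k. ennreal (real k) \<partial>binomial_pmf n p)"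
      by (rule nn_integral_add) auto
    finally show ?thesis using Suc by (simp add: measure_pmf.emeasure_space_1)
  qed
  have "(\<integral>\<^sup>+x. ennreal (real x) \<partial>binomial_pmf (Suc n) p)
      = (\<integral>\<^sup>+b. (\<integral>\<^sup>+k. ennreal (real ((if b then 1 else 0) + k)) \<partial>binomial_pmf n p) \<partial>bernoulli_pmf p)"
    using p by (simp add: binomial_pmf_Suc nn_integral_return)
  also have "\<dots> = (1 + ennreal (real n * p)) * ennreal p + ennreal (real n * p) * ennreal (1 - p)"
    using p e1 Suc by (subst nn_integral_bernoulli_pmf) auto
  also have "\<dots> = ennreal (real (Suc n) * p)"
  proof -
    have a: "0 \<le> real n * p * (1 - p)" using p by simp
    have "(1 + ennreal (real n * p)) * ennreal p + ennreal (real n * p) * ennreal (1 - p)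
        = ennreal ((1 + real n * p) * p) + ennreal (real n * p * (1 - p))"
    proof -
      have e: "1 + ennreal (real n * p) = ennreal (1 + real n * p)" using p by (simp add: ennreal_plus)
      have f: "ennreal (1 + real n * p) * ennreal p = ennreal ((1 + real n * p) * p)"
        using p by (intro ennreal_mult[symmetric]) auto
      have g: "ennreal (real n * p) * ennreal (1 - p) = ennreal (real n * p * (1 - p))"
        using p by (intro ennreal_mult[symmetric]) auto
      show ?thesis unfolding e f g ..
    qed
    also have "\<dots> = ennreal ((1 + real n * p) * p + real n * p * (1 - p))"
      using p a by (subst ennreal_plus) auto
    also have "(1 + real n * p) * p + real n * p * (1 - p) = real (Suc n) * p"
      by (simp add: algebra_simps)
    finally show ?thesis .
  qed
  finally show ?case .
qed

lemma binom_sub: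
  assumes p: "0 \<le> p" "p \<le> 1" and kh: "k \<le> h" and W: "0 \<le> W"
  shows "(\<integral>\<^sup>+x. ennreal (real (h - x) * W) \<partial>binomial_pmf k p) = ennreal ((real h - real k * p) * W)"
proof -
  have supp: "x \<le> k" if "x \<in> set_pmf (binomial_pmf k p)" for x
    using that p by (auto simp: set_pmf_binomial_eq split: if_splits)
  have "(\<integral>\<^sup>+x. ennreal (real (h - x) * W) \<partial>binomial_pmf k p) + (\<integral>\<^sup>+x. ennreal (real x * W) \<partial>binomial_pmf k p)
      = (\<integral>\<^sup>+x. ennreal (real (h - x) * W) + ennreal (real x * W) \<partial>binomial_pmf k p)"
    by (rule nn_integral_add[symmetric]) auto
  also have "\<dots> = (\<integral>\<^sup>+x. ennreal (real h * W) \<partial>binomial_pmf k p)"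
  proof (intro nn_integral_cong_AE AE_pmfI)
    fix x assume "x \<in> set_pmf (binomial_pmf k p)"
    hence "x \<le> h" using supp kh by force
    hence "real (h - x) * W + real x * W = real h * W" by (simp add: of_nat_diff algebra_simps)
    thus "ennreal (real (h - x) * W) + ennreal (real x * W) = ennreal (real h * W)"
      using W by (simp add: ennreal_plus[symmetric] del: ennreal_plus)
  qed
  also have "\<dots> = ennreal (real h * W)" by (simp add: measure_pmf.emeasure_space_1)
  finally have eq: "(\<integral>\<^sup>+x. ennreal (real (h - x) * W) \<partial>binomial_pmf k p) + (\<integral>\<^sup>+x. ennreal (real x * W) \<partial>binomial_pmf k p)
      = ennreal (real h * W)" .
  have "(\<integral>\<^sup>+x. ennreal (real x * W) \<partial>binomial_pmf k p) = (\<integral>\<^sup>+x. ennreal W * ennreal (real x) \<partial>binomial_pmf k p)"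
    using W by (intro nn_integral_cong) (simp add: ennreal_mult mult.commute)
  also have "\<dots> = ennreal W * ennreal (real k * p)"
    using p by (subst nn_integral_cmult) (auto simp: binomial_mean_nn)
  also have "\<dots> = ennreal (real k * p * W)" using W p by (simp add: ennreal_mult[symmetric] mult.commute)
  finally have m: "(\<integral>\<^sup>+x. ennreal (real x * W) \<partial>binomial_pmf k p) = ennreal (real k * p * W)" .
  have "(\<integral>\<^sup>+x. ennreal (real (h - x) * W) \<partial>binomial_pmf k p) = ennreal (real h * W) - ennreal (real k * p * W)"
    using eq unfolding m by (metis ennreal_add_diff_cancel_right ennreal_neq_top)
  also have "\<dots> = ennreal (real h * W - real k * p * W)"
    using p W by (intro ennreal_minus) auto
  finally show ?thesis by (simp add: algebra_simps)
qed



lemma nat_ceil_le: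
  assumes "0 \<le> q" "q \<le> 1"
  shows "nat \<lceil>q * real h\<rceil> \<le> h"
proof -
  have "q * real h \<le> real h" using assms by (simp add: mult_left_le_one_le)
  hence "\<lceil>q * real h\<rceil> \<le> int h" by (metis ceiling_le of_int_of_nat_eq)
  thus ?thesis by linarith
qed

lemma nat_ceil_ge:
  assumes "0 \<le> q"
  shows "q * real h \<le> real (nat \<lceil>q * real h\<rceil>)"
proof -
  have "q * real h \<le> real_of_int \<lceil>q * real h\<rceil>" by (rule le_of_int_ceiling)
  moreover have "0 \<le> q * real h" using assms by simp
  hence "0 \<le> \<lceil>q * real h\<rceil>" by (simp add: zero_le_ceiling)
  ultimately show ?thesis by simp
qed

lemma draws_support:
  assumes p: "0 \<le> p" "p \<le> 1" and q: "0 \<le> q" "q \<le> 1"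
  shows "xs \<in> set_pmf (bs_draws p q hs) \<Longrightarrow> list_all2 (\<le>) xs hs"
proof (induction hs arbitrary: xs)
  case Nil
  then show ?case by simp
next
  case (Cons h hs)
  then obtain x xs' where xs: "xs = x # xs'" and x: "x \<in> set_pmf (binomial_pmf (nat \<lceil>q * real h\<rceil>) p)"
    and xs': "xs' \<in> set_pmf (bs_draws p q hs)" by auto
  have "x \<le> nat \<lceil>q * real h\<rceil>" using x p by (auto simp: set_pmf_binomial_eq split: if_splits)
  also have "\<dots> \<le> h" using q by (rule nat_ceil_le)
  finally show ?case using Cons.IH[OF xs'] xs by simp
qed

lemma draws_exp:
  assumes p: "0 \<le> p" "p \<le> 1" and q: "0 \<le> q" "q \<le> 1" and w: "\<And>j. 0 \<le> w j"
  shows "(\<integral>\<^sup>+xs. ennreal (psi w (map2 (-) hs xs)) \<partial>bs_draws p q hs) \<le> ennreal ((1 - p * q) * psi w hs)"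
proof (induction hs)
  case Nil
  then show ?case by simp
next
  case (Cons h hs)
  define k where "k = nat \<lceil>q * real h\<rceil>"
  define W where "W = w (length hs)"
  have W0: "0 \<le> W" using w by (simp add: W_def)
  have r0: "0 \<le> 1 - p * q" using p q by (simp add: mult_le_one)
  have inner: "(\<integral>\<^sup>+xs. ennreal (psi w (map2 (-) (h # hs) (x # xs))) \<partial>bs_draws p q hs)
      \<le> ennreal (real (h - x) * W) + ennreal ((1 - p * q) * psi w hs)" for x
  proof -
    have "(\<integral>\<^sup>+xs. ennreal (psi w (map2 (-) (h # hs) (x # xs))) \<partial>bs_draws p q hs)
        = (\<integral>\<^sup>+xs. ennreal (real (h - x) * W) + ennreal (psi w (map2 (-) hs xs)) \<partial>bs_draws p q hs)"
    proof (intro nn_integral_cong_AE AE_pmfI)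
      fix xs assume "xs \<in> set_pmf (bs_draws p q hs)"
      hence "length xs = length hs" using draws_support[OF p q] list_all2_lengthD by blast
      thus "ennreal (psi w (map2 (-) (h # hs) (x # xs))) = ennreal (real (h - x) * W) + ennreal (psi w (map2 (-) hs xs))"
        using W0 w psi_nonneg[OF w] by (simp add: W_def ennreal_plus[symmetric] del: ennreal_plus)
    qed
    also have "\<dots> = ennreal (real (h - x) * W) + (\<integral>\<^sup>+xs. ennreal (psi w (map2 (-) hs xs)) \<partial>bs_draws p q hs)"
      by (subst nn_integral_add) (auto simp: measure_pmf.emeasure_space_1)
    also have "\<dots> \<le> ennreal (real (h - x) * W) + ennreal ((1 - p * q) * psi w hs)"
      using Cons by (intro add_left_mono)
    finally show ?thesis .
  qed
  have "(\<integral>\<^sup>+xs. ennreal (psi w (map2 (-) (h # hs) xs)) \<partial>bs_draws p q (h # hs))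
      = (\<integral>\<^sup>+x. (\<integral>\<^sup>+xs. ennreal (psi w (map2 (-) (h # hs) (x # xs))) \<partial>bs_draws p q hs) \<partial>binomial_pmf k p)"
    by (simp add: k_def)
  also have "\<dots> \<le> (\<integral>\<^sup>+x. ennreal (real (h - x) * W) + ennreal ((1 - p * q) * psi w hs) \<partial>binomial_pmf k p)"
    by (intro nn_integral_mono inner)
  also have "\<dots> = (\<integral>\<^sup>+x. ennreal (real (h - x) * W) \<partial>binomial_pmf k p) + ennreal ((1 - p * q) * psi w hs)"
    by (subst nn_integral_add) (auto simp: measure_pmf.emeasure_space_1)
  also have "\<dots> = ennreal ((real h - real k * p) * W) + ennreal ((1 - p * q) * psi w hs)"
    using p W0 nat_ceil_le[OF q, of h] by (subst binom_sub) (auto simp: k_def)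
  also have "\<dots> \<le> ennreal ((1 - p * q) * (real h * W)) + ennreal ((1 - p * q) * psi w hs)"
  proof -
    have "q * real h \<le> real k" using nat_ceil_ge[OF q(1)] by (simp add: k_def)
    hence "p * (q * real h) \<le> p * real k" using p by (simp add: mult_left_mono)
    hence "(real h - real k * p) * W \<le> (1 - p * q) * (real h * W)"
      using W0 by (simp add: algebra_simps mult_left_mono)
    thus ?thesis by (intro add_right_mono ennreal_leI)
  qed
  also have "\<dots> = ennreal ((1 - p * q) * psi w (h # hs))"
  proof -
    have a: "0 \<le> (1 - p * q) * (real h * W)" using r0 W0 by simp
    have b: "0 \<le> (1 - p * q) * psi w hs" using r0 psi_nonneg[of w hs] w by simp
    have "ennreal ((1 - p * q) * (real h * W)) + ennreal ((1 - p * q) * psi w hs)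
        = ennreal ((1 - p * q) * (real h * W) + (1 - p * q) * psi w hs)"
      using a b by (rule ennreal_plus[symmetric])
    also have "(1 - p * q) * (real h * W) + (1 - p * q) * psi w hs = (1 - p * q) * psi w (h # hs)"
      by (simp add: W_def algebra_simps)
    finally show ?thesis .
  qed
  finally show ?case .
qed



lemma sum_map2: "list_all2 (\<le>) xs hs \<Longrightarrow> sum_list (map2 (-) hs xs) + sum_list xs = sum_list (hs::nat list)"
  by (induction rule: list_all2_induct) auto

lemma sum_filter_pos: "sum_list (filter (\<lambda>h. 0 < h) zs) = sum_list (zs::nat list)"
  by (induction zs) auto

lemma step_support_sum:
  assumes p: "0 \<le> p" "p \<le> 1" and q: "0 \<le> q" "q \<le> 1"
  shows "ys \<in> set_pmf (bs_step p q hs) \<Longrightarrow> sum_list ys = sum_list hs"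
proof -
  assume "ys \<in> set_pmf (bs_step p q hs)"
  then obtain xs where xs: "xs \<in> set_pmf (bs_draws p q hs)"
    and ys: "ys = filter (\<lambda>h. 0 < h) (map2 (-) hs xs @ [sum_list xs])"
    by (auto simp: bs_step_def)
  have "sum_list ys = sum_list (map2 (-) hs xs @ [sum_list xs])" unfolding ys by (rule sum_filter_pos)
  also have "\<dots> = sum_list hs" using sum_map2[OF draws_support[OF p q xs]] by simp
  finally show ?thesis .
qed

lemma step_exp:
  assumes p: "0 \<le> p" "p \<le> 1" and q: "0 \<le> q" "q \<le> 1" and w: "\<And>j. 0 \<le> w j" "mono w"
    and wc: "\<And>j. w (Suc j) \<le> c * w j" and w0: "w 0 = 1" and c: "0 \<le> c"
  shows "(\<integral>\<^sup>+ys. ennreal (psi w ys) \<partial>bs_step p q hs) \<le> ennreal (c * (1 - p * q) * psi w hs + real (sum_list hs))"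
proof -
  have r0: "0 \<le> 1 - p * q" using p q by (simp add: mult_le_one)
  have "(\<integral>\<^sup>+ys. ennreal (psi w ys) \<partial>bs_step p q hs)
      = (\<integral>\<^sup>+xs. ennreal (psi w (filter (\<lambda>h. 0 < h) (map2 (-) hs xs @ [sum_list xs]))) \<partial>bs_draws p q hs)"
    by (simp add: bs_step_def)
  also have "\<dots> \<le> (\<integral>\<^sup>+xs. ennreal c * ennreal (psi w (map2 (-) hs xs)) + ennreal (real (sum_list hs)) \<partial>bs_draws p q hs)"
  proof (intro nn_integral_mono_AE AE_pmfI)
    fix xs assume xs: "xs \<in> set_pmf (bs_draws p q hs)"
    define A where "A = map2 (-) hs xs"
    have s: "sum_list xs \<le> sum_list hs" using sum_map2 draws_support[OF p q xs] by (metis le_add2)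
    have "psi w (filter (\<lambda>h. 0 < h) (A @ [sum_list xs])) \<le> psi w (A @ [sum_list xs])"
      using w by (rule psi_filter)
    also have "\<dots> = psi (\<lambda>j. w (Suc j)) A + real (sum_list xs)" by (simp add: psi_append1 w0)
    also have "\<dots> \<le> psi (\<lambda>j. c * w j) A + real (sum_list hs)"
      using s by (intro add_mono psi_mono_w wc) auto
    also have "\<dots> = c * psi w A + real (sum_list hs)" by (simp add: psi_cmult)
    finally have le: "psi w (filter (\<lambda>h. 0 < h) (A @ [sum_list xs])) \<le> c * psi w A + real (sum_list hs)" .
    have "ennreal (psi w (filter (\<lambda>h. 0 < h) (A @ [sum_list xs]))) \<le> ennreal (c * psi w A + real (sum_list hs))"
      using le by (rule ennreal_leI)
    also have "\<dots> = ennreal c * ennreal (psi w A) + ennreal (real (sum_list hs))"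
      using c psi_nonneg[of w A] w by (simp add: ennreal_mult ennreal_plus)
    finally show "ennreal (psi w (filter (\<lambda>h. 0 < h) (map2 (-) hs xs @ [sum_list xs])))
        \<le> ennreal c * ennreal (psi w (map2 (-) hs xs)) + ennreal (real (sum_list hs))"
      by (simp add: A_def)
  qed
  also have "\<dots> = ennreal c * (\<integral>\<^sup>+xs. ennreal (psi w (map2 (-) hs xs)) \<partial>bs_draws p q hs) + ennreal (real (sum_list hs))"
    by (subst nn_integral_add) (auto simp: nn_integral_cmult measure_pmf.emeasure_space_1)
  also have "\<dots> \<le> ennreal c * ennreal ((1 - p * q) * psi w hs) + ennreal (real (sum_list hs))"
    by (intro add_right_mono mult_left_mono draws_exp[OF p q w(1)]) auto
  also have "\<dots> = ennreal (c * (1 - p * q) * psi w hs + real (sum_list hs))"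
    using c r0 psi_nonneg[of w hs] w by (simp add: ennreal_mult[symmetric] ennreal_plus[symmetric] mult.assoc del: ennreal_plus)
  finally show ?thesis .
qed



primrec st :: "real \<Rightarrow> real \<Rightarrow> nat list \<Rightarrow> nat \<Rightarrow> nat list pmf" where
  "st p q a 0 = return_pmf a"
| "st p q a (Suc k) = bind_pmf (st p q a k) (bs_step p q)"

lemma traj_length: "ps \<in> set_pmf (bs_traj p q a m) \<Longrightarrow> length ps = Suc m"
  by (induction m arbitrary: ps) auto

lemma traj_marg: "k \<le> m \<Longrightarrow> map_pmf (\<lambda>ps. ps ! k) (bs_traj p q a m) = st p q a k"
proof (induction m arbitrary: k)
  case 0
  then show ?case by simp
next
  case (Suc m)
  have eq: "map_pmf (\<lambda>ps. ps ! k) (bs_traj p q a (Suc m))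
      = bind_pmf (bs_traj p q a m) (\<lambda>ps. map_pmf (\<lambda>y. (ps @ [y]) ! k) (bs_step p q (last ps)))"
    by (simp add: map_bind_pmf map_pmf_comp)
  show ?case
  proof (cases "k \<le> m")
    case True
    have "bind_pmf (bs_traj p q a m) (\<lambda>ps. map_pmf (\<lambda>y. (ps @ [y]) ! k) (bs_step p q (last ps)))
        = bind_pmf (bs_traj p q a m) (\<lambda>ps. return_pmf (ps ! k))"
    proof (intro bind_pmf_cong refl)
      fix ps assume "ps \<in> set_pmf (bs_traj p q a m)"
      hence "length ps = Suc m" by (rule traj_length)
      hence "(\<lambda>y. (ps @ [y]) ! k) = (\<lambda>y. ps ! k)" using True by (auto simp: nth_append)
      thus "map_pmf (\<lambda>y. (ps @ [y]) ! k) (bs_step p q (last ps)) = return_pmf (ps ! k)"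
        by (simp add: map_pmf_const)
    qed
    also have "\<dots> = map_pmf (\<lambda>ps. ps ! k) (bs_traj p q a m)" by (simp add: map_pmf_def)
    finally show ?thesis using eq Suc.IH[OF True] by simp
  next
    case False
    hence k: "k = Suc m" using Suc.prems by simp
    have "bind_pmf (bs_traj p q a m) (\<lambda>ps. map_pmf (\<lambda>y. (ps @ [y]) ! k) (bs_step p q (last ps)))
        = bind_pmf (bs_traj p q a m) (\<lambda>ps. bs_step p q (ps ! m))"
    proof (intro bind_pmf_cong refl)
      fix ps assume "ps \<in> set_pmf (bs_traj p q a m)"
      hence l: "length ps = Suc m" by (rule traj_length)
      hence "(\<lambda>y. (ps @ [y]) ! k) = (\<lambda>y. y)" using k by (auto simp: nth_append)
      moreover have "last ps = ps ! m" using l by (metis diff_Suc_1 last_conv_nth list.size(3) nat.distinct(1))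
      ultimately show "map_pmf (\<lambda>y. (ps @ [y]) ! k) (bs_step p q (last ps)) = bs_step p q (ps ! m)"
        by (simp add: pmf.map_id0[unfolded id_def])
    qed
    also have "\<dots> = bind_pmf (map_pmf (\<lambda>ps. ps ! m) (bs_traj p q a m)) (bs_step p q)"
      by (simp add: bind_map_pmf)
    also have "\<dots> = st p q a k" using Suc.IH[of m] k by simp
    finally show ?thesis using eq by simp
  qed
qed

lemma st_sum:
  assumes p: "0 \<le> p" "p \<le> 1" and q: "0 \<le> q" "q \<le> 1"
  shows "hs \<in> set_pmf (st p q a k) \<Longrightarrow> sum_list hs = sum_list a"
  by (induction k arbitrary: hs) (auto dest: step_support_sum[OF p q])

lemma st_exp:
  assumes p: "0 \<le> p" "p \<le> 1" and q: "0 \<le> q" "q \<le> 1" and w: "\<And>j. 0 \<le> w j" "mono w"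
    and wc: "\<And>j. w (Suc j) \<le> c * w j" and w0: "w 0 = 1" and c: "0 \<le> c"
    and g: "c * (1 - p * q) < 1"
  shows "(\<integral>\<^sup>+hs. ennreal (psi w hs) \<partial>st p q a k)
     \<le> ennreal ((c * (1 - p * q)) ^ k * psi w a + real (sum_list a) / (1 - c * (1 - p * q)))"
proof (induction k)
  case 0
  have "0 \<le> real (sum_list a) / (1 - c * (1 - p * q))" using g by simp
  then show ?case by (simp add: ennreal_leI)
next
  case (Suc k)
  define \<gamma> where "\<gamma> = c * (1 - p * q)"
  define S where "S = real (sum_list a)"
  have g0: "0 \<le> \<gamma>" using c p q by (simp add: \<gamma>_def mult_le_one)
  have g1: "\<gamma> < 1" using g by (simp add: \<gamma>_def)
  have S0: "0 \<le> S" by (simp add: S_def)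
  have pa: "0 \<le> psi w a" using w by (intro psi_nonneg) auto
  have "(\<integral>\<^sup>+hs. ennreal (psi w hs) \<partial>st p q a (Suc k))
      = (\<integral>\<^sup>+hs. (\<integral>\<^sup>+ys. ennreal (psi w ys) \<partial>bs_step p q hs) \<partial>st p q a k)" by simp
  also have "\<dots> \<le> (\<integral>\<^sup>+hs. ennreal \<gamma> * ennreal (psi w hs) + ennreal S \<partial>st p q a k)"
  proof (intro nn_integral_mono_AE AE_pmfI)
    fix hs assume hs: "hs \<in> set_pmf (st p q a k)"
    have "(\<integral>\<^sup>+ys. ennreal (psi w ys) \<partial>bs_step p q hs) \<le> ennreal (\<gamma> * psi w hs + S)"
      using step_exp[OF p q w wc w0 c, of hs] st_sum[OF p q hs] by (simp add: \<gamma>_def S_def)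
    also have "\<dots> = ennreal \<gamma> * ennreal (psi w hs) + ennreal S"
      using g0 S0 psi_nonneg[of w hs] w by (simp add: ennreal_mult ennreal_plus)
    finally show "(\<integral>\<^sup>+ys. ennreal (psi w ys) \<partial>bs_step p q hs) \<le> ennreal \<gamma> * ennreal (psi w hs) + ennreal S" .
  qed
  also have "\<dots> = ennreal \<gamma> * (\<integral>\<^sup>+hs. ennreal (psi w hs) \<partial>st p q a k) + ennreal S"
    by (subst nn_integral_add) (auto simp: nn_integral_cmult measure_pmf.emeasure_space_1)
  also have "\<dots> \<le> ennreal \<gamma> * ennreal (\<gamma> ^ k * psi w a + S / (1 - \<gamma>)) + ennreal S"
    using Suc by (intro add_right_mono mult_left_mono) (auto simp: \<gamma>_def S_def)
  also have "\<dots> = ennreal (\<gamma> * (\<gamma> ^ k * psi w a + S / (1 - \<gamma>)) + S)"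
    using g0 g1 S0 pa by (simp add: ennreal_mult ennreal_plus)
  also have "\<gamma> * (\<gamma> ^ k * psi w a + S / (1 - \<gamma>)) + S = \<gamma> ^ Suc k * psi w a + S / (1 - \<gamma>)"
    using g1 by (simp add: field_simps)
  finally show ?case by (simp add: \<gamma>_def S_def)
qed



lemma markov_piles:
  assumes p: "0 \<le> p" "p \<le> 1" and q: "0 \<le> q" "q \<le> 1" and c: "1 \<le> c"
    and g: "c * (1 - p * q) < 1" and T: "real D \<le> T"
  shows "measure_pmf.prob (st p q a k) {hs. T < real (num_piles hs)}
     \<le> ((c * (1 - p * q)) ^ k * psi (\<lambda>j. c ^ min j D) a + real (sum_list a) / (1 - c * (1 - p * q))) / c ^ D"
proof -
  define w where "w = (\<lambda>j. c ^ min j D)"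
  define B where "B = (c * (1 - p * q)) ^ k * psi w a + real (sum_list a) / (1 - c * (1 - p * q))"
  have w0: "\<And>j. 0 \<le> w j" using c by (simp add: w_def)
  have wm: "mono w" unfolding w_def using c by (intro monoI power_increasing) auto
  have wc: "w (Suc j) \<le> c * w j" for j
  proof (cases "j < D")
    case True thus ?thesis by (simp add: w_def min_def)
  next
    case False thus ?thesis using c by (simp add: w_def min_def)
  qed
  have cD: "0 < c ^ D" using c by simp
  have g0: "0 \<le> c * (1 - p * q)" using c p q by (simp add: mult_le_one)
  have B0: "0 \<le> B" unfolding B_def using g g0 w0 psi_nonneg[of w a] by (intro add_nonneg_nonneg) auto
  have sub: "{hs. T < real (num_piles hs)} \<subseteq> {hs\<in>UNIV. 1 \<le> ennreal (1 / c ^ D) * ennreal (psi w hs)}"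
  proof safe
    fix hs assume "T < real (num_piles hs)"
    hence "D + 1 \<le> num_piles hs" using T by linarith
    hence "real D + 1 \<le> real D + psi w hs / c ^ D" using num_piles_psi[OF c, of hs D]
      unfolding w_def by linarith
    hence "1 \<le> 1 / c ^ D * psi w hs" by simp
    hence "ennreal 1 \<le> ennreal (1 / c ^ D * psi w hs)" by (rule ennreal_leI)
    also have "ennreal (1 / c ^ D * psi w hs) = ennreal (1 / c ^ D) * ennreal (psi w hs)"
      using cD w0 psi_nonneg[of w hs] by (intro ennreal_mult) auto
    finally show "1 \<le> ennreal (1 / c ^ D) * ennreal (psi w hs)" by simp
  qed simp
  have "ennreal (measure_pmf.prob (st p q a k) {hs. T < real (num_piles hs)})
      = emeasure (st p q a k) {hs. T < real (num_piles hs)}"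
    by (simp add: measure_pmf.emeasure_eq_measure)
  also have "\<dots> \<le> emeasure (st p q a k) {hs\<in>UNIV. 1 \<le> ennreal (1 / c ^ D) * ennreal (psi w hs)}"
    using sub by (intro emeasure_mono) auto
  also have "\<dots> \<le> ennreal (1 / c ^ D) * (\<integral>\<^sup>+hs. ennreal (psi w hs) * indicator UNIV hs \<partial>st p q a k)"
    by (rule nn_integral_Markov_inequality) auto
  also have "\<dots> = ennreal (1 / c ^ D) * (\<integral>\<^sup>+hs. ennreal (psi w hs) \<partial>st p q a k)" by simp
  also have "\<dots> \<le> ennreal (1 / c ^ D) * ennreal B"
    unfolding B_def using st_exp[OF p q w0 wm wc _ _ g] c by (intro mult_left_mono) (auto simp: w_def)
  also have "\<dots> = ennreal (B / c ^ D)" using cD B0 by (simp add: ennreal_mult[symmetric])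
  finally show ?thesis using B0 cD unfolding B_def w_def by (simp add: ennreal_le_iff)
qed

lemma markov_traj:
  assumes p: "0 \<le> p" "p \<le> 1" and q: "0 \<le> q" "q \<le> 1" and c: "1 \<le> c"
    and g: "c * (1 - p * q) < 1" and T: "real D \<le> T" and km: "k \<le> m"
  shows "measure_pmf.prob (bs_traj p q a m) {ps. T < real (num_piles (ps ! k))}
     \<le> ((c * (1 - p * q)) ^ k * psi (\<lambda>j. c ^ min j D) a + real (sum_list a) / (1 - c * (1 - p * q))) / c ^ D"
proof -
  have "measure_pmf.prob (bs_traj p q a m) {ps. T < real (num_piles (ps ! k))}
      = measure_pmf.prob (map_pmf (\<lambda>ps. ps ! k) (bs_traj p q a m)) {hs. T < real (num_piles hs)}"
    by (simp add: measure_map_pmf vimage_def)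
  also have "\<dots> = measure_pmf.prob (st p q a k) {hs. T < real (num_piles hs)}"
    using km by (simp add: traj_marg)
  finally show ?thesis using markov_piles[OF p q c g T] by simp
qed



lemma gamma_pow_bound:
  assumes x: "0 < x" "x \<le> 1" and D: "14 * L / x \<le> real D"
  shows "((1 + 3 * x / 5) * (1 - x)) ^ D \<le> exp (-(28/5) * L)"
proof -
  have g0: "0 \<le> (1 + 3 * x / 5) * (1 - x)" using x by simp
  have "(1 + 3 * x / 5) * (1 - x) \<le> 1 + (- 2 * x / 5)" using x by (simp add: algebra_simps)
  also have "\<dots> \<le> exp (- 2 * x / 5)" by (rule exp_ge_add_one_self)
  finally have "((1 + 3 * x / 5) * (1 - x)) ^ D \<le> exp (- 2 * x / 5) ^ D"
    using g0 by (intro power_mono) auto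
  also have "\<dots> = exp (- 2 * x / 5 * real D)" by (simp add: exp_of_nat_mult[symmetric] mult.commute)
  also have "\<dots> \<le> exp (-(28/5) * L)"
  proof -
    have "14 * L \<le> x * real D" using D x by (simp add: field_simps)
    thus ?thesis by simp
  qed
  finally show ?thesis .
qed

lemma c_pow_bound:
  assumes x: "0 < x" "x \<le> 1" and D: "14 * L / x \<le> real D"
  shows "exp ((21/4) * L) \<le> (1 + 3 * x / 5) ^ D"
proof -
  define c where "c = 1 + 3 * x / 5"
  have c0: "0 < c" using x by (simp add: c_def)
  have "ln (1 / c) \<le> 1 / c - 1" using c0 by (intro ln_le_minus_one) auto
  hence lnc: "1 - 1 / c \<le> ln c" using c0 by (simp add: ln_div)
  have "3 * x / 8 \<le> 1 - 1 / c"
    using x by (simp add: c_def field_simps)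
  hence lc: "3 * x / 8 \<le> ln c" using lnc by linarith
  have "(21/4) * L \<le> 3 * x / 8 * real D"
  proof -
    have "14 * L \<le> x * real D" using D x by (simp add: field_simps)
    thus ?thesis by simp
  qed
  also have "\<dots> \<le> ln c * real D" using lc by (intro mult_right_mono) auto
  finally have "exp ((21/4) * L) \<le> exp (ln c * real D)" by simp
  also have "\<dots> = c ^ D" using c0 by (metis exp_ln exp_of_nat_mult mult.commute)
  finally show ?thesis by (simp add: c_def)
qed



lemma per_n:
  fixes p q \<epsilon> :: real and n :: nat and a :: "nat list"
  assumes p: "0 < p" "p \<le> 1" and q: "0 < q" "q \<le> 1" and a: "sum_list a = n"
    and x1: "1 \<le> p * q * real n" and \<epsilon>: "0 < \<epsilon>"
    and Dle: "real (nat \<lceil>14 * ln (real n) / (p * q)\<rceil>) \<le> \<epsilon> * (q * real n)"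
  shows "(let D = nat \<lceil>14 * ln (real n) / (p * q)\<rceil>; M = nat \<lceil>(real n)\<^sup>2 / p\<rceil> in
     measure_pmf.prob (bs_traj p q a (D + M))
       {ps. \<bar>real (Max ((\<lambda>k. num_piles (ps ! k)) ` {D + 1 .. D + M})) / (q * real n)\<bar> > \<epsilon>})
   \<le> (real n ^ 3 + 1) * real n * exp (-(28/5) * ln (real n))
      + (real n ^ 3 + 1) * real n * (5 * real n / 2) * exp (-(21/4) * ln (real n))"
proof -
  define D where "D = nat \<lceil>14 * ln (real n) / (p * q)\<rceil>"
  define M where "M = nat \<lceil>(real n)\<^sup>2 / p\<rceil>"
  define x where "x = p * q"
  define c where "c = 1 + 3 * x / 5"
  define \<gamma> where "\<gamma> = c * (1 - x)"
  define L where "L = ln (real n)"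
  define e1 where "e1 = exp (-(28/5) * L)"
  define e2 where "e2 = exp (-(21/4) * L)"
  define K where "K = {D + 1 .. D + M}"
  define bnd where "bnd = real n * e1 + real n * (5 * real n / 2) * e2"
  have pq1: "p * q \<le> 1" using p q by (simp add: mult_le_one)
  have "p * q * real n \<le> real n" using pq1 p q by (intro mult_left_le_one_le) auto
  hence n1: "1 \<le> real n" using x1 by linarith
  have x0: "0 < x" "x \<le> 1" using p q by (auto simp: x_def mult_le_one)
  have c1: "1 \<le> c" using x0 by (simp add: c_def)
  have g0: "0 \<le> \<gamma>" using x0 c1 by (simp add: \<gamma>_def)
  have gx: "\<gamma> \<le> 1 - 2 * x / 5" using x0 by (simp add: \<gamma>_def c_def algebra_simps)
  have g1: "\<gamma> < 1" using gx x0 by simp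
  have qn: "0 < q * real n" using q n1 by simp
  have Dr: "14 * L / x \<le> real D"
    unfolding D_def L_def x_def by linarith
  have Dr2: "real D \<le> \<epsilon> * (q * real n)" using Dle by (simp add: D_def)
  have M1: "1 \<le> M"
  proof -
    have "0 < (real n)\<^sup>2 / p" using n1 p by simp
    thus ?thesis unfolding M_def by linarith
  qed
  have Mle: "real M \<le> real n ^ 3 + 1"
  proof -
    have "q * (p * real n) \<le> p * real n" using p q by (intro mult_left_le_one_le) auto
    hence "1 \<le> p * real n" using x1 by (simp add: algebra_simps)
    hence "1 / p \<le> real n" using p by (simp add: field_simps)
    hence "(real n)\<^sup>2 / p \<le> (real n)\<^sup>2 * real n"
      using mult_left_mono[of "1/p" "real n" "(real n)\<^sup>2"] by simp
    hence "(real n)\<^sup>2 / p \<le> real n ^ 3" by (simp add: power2_eq_square power3_eq_cube)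
    moreover have "real M \<le> (real n)\<^sup>2 / p + 1"
    proof -
      have "0 \<le> (real n)\<^sup>2 / p" using p by simp
      thus ?thesis unfolding M_def by linarith
    qed
    ultimately show ?thesis by linarith
  qed
  have sub: "{ps. \<bar>real (Max ((\<lambda>k. num_piles (ps ! k)) ` K)) / (q * real n)\<bar> > \<epsilon>}
      \<subseteq> (\<Union>k\<in>K. {ps. \<epsilon> * (q * real n) < real (num_piles (ps ! k))})"
  proof safe
    fix ps assume A: "\<bar>real (Max ((\<lambda>k. num_piles (ps ! k)) ` K)) / (q * real n)\<bar> > \<epsilon>"
    have Kne: "K \<noteq> {}" "finite K" using M1 by (auto simp: K_def)
    have "Max ((\<lambda>k. num_piles (ps ! k)) ` K) \<in> (\<lambda>k. num_piles (ps ! k)) ` K"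
      using Kne by (intro Max_in) auto
    then obtain k where k: "k \<in> K" "num_piles (ps ! k) = Max ((\<lambda>k. num_piles (ps ! k)) ` K)"
      by (metis (no_types, lifting) imageE)
    have "\<epsilon> < real (num_piles (ps ! k)) / (q * real n)" using A k qn by simp
    hence "\<epsilon> * (q * real n) < real (num_piles (ps ! k))" using qn by (simp add: field_simps)
    thus "ps \<in> (\<Union>k\<in>K. {ps. \<epsilon> * (q * real n) < real (num_piles (ps ! k))})" using k(1) by blast
  qed
  have each: "measure_pmf.prob (bs_traj p q a (D + M)) {ps. \<epsilon> * (q * real n) < real (num_piles (ps ! k))} \<le> bnd"
    if k: "k \<in> K" for k
  proof -
    have km: "k \<le> D + M" "D + 1 \<le> k" using k by (auto simp: K_def)
    have "measure_pmf.prob (bs_traj p q a (D + M)) {ps. \<epsilon> * (q * real n) < real (num_piles (ps ! k))}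
        \<le> (\<gamma> ^ k * psi (\<lambda>j. c ^ min j D) a + real n / (1 - \<gamma>)) / c ^ D"
      using markov_traj[OF _ _ _ _ c1 _ Dr2 km(1), of p q a] p q g1 a
      by (simp add: \<gamma>_def x_def)
    also have "\<dots> = \<gamma> ^ k * (psi (\<lambda>j. c ^ min j D) a / c ^ D) + (real n / (1 - \<gamma>)) / c ^ D"
      by (simp add: add_divide_distrib)
    also have "\<dots> \<le> \<gamma> ^ D * real n + real n * (5 * real n / 2) * e2"
    proof (intro add_mono)
      have cD: "0 < c ^ D" using c1 by simp
      have "psi (\<lambda>j. c ^ min j D) a \<le> c ^ D * real (sum_list a)"
        using c1 by (intro psi_le_sum power_increasing) auto
      hence ps: "psi (\<lambda>j. c ^ min j D) a / c ^ D \<le> real n" using cD a by (simp add: field_simps)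
      have "\<gamma> ^ k \<le> \<gamma> ^ D" using g0 g1 km by (intro power_decreasing) auto
      thus "\<gamma> ^ k * (psi (\<lambda>j. c ^ min j D) a / c ^ D) \<le> \<gamma> ^ D * real n"
      proof (intro mult_mono)
        show "0 \<le> psi (\<lambda>j. c ^ min j D) a / c ^ D" using c1 cD
          by (intro divide_nonneg_pos psi_nonneg) auto
      qed (use ps g0 in auto)
      have i1: "1 / (1 - \<gamma>) \<le> 5 * real n / 2"
      proof -
        have "2 * x / 5 \<le> 1 - \<gamma>" using gx by simp
        hence "1 / (1 - \<gamma>) \<le> 1 / (2 * x / 5)" using x0 by (intro divide_left_mono) auto
        also have "\<dots> = 5 / (2 * x)" by simp
        also have "\<dots> \<le> 5 * real n / 2" using x1 x0 by (simp add: x_def field_simps)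
        finally show ?thesis .
      qed
      have i2: "1 / c ^ D \<le> e2"
      proof -
        have "exp ((21/4) * L) \<le> c ^ D" using c_pow_bound[OF x0 Dr] by (simp add: c_def)
        hence "1 / c ^ D \<le> 1 / exp ((21/4) * L)" using cD by (intro divide_left_mono) auto
        thus ?thesis by (simp add: e2_def exp_minus field_simps)
      qed
      have "(real n / (1 - \<gamma>)) / c ^ D = real n * (1 / (1 - \<gamma>)) * (1 / c ^ D)" by simp
      also have "\<dots> \<le> real n * (5 * real n / 2) * e2"
        using i1 i2 g1 cD by (intro mult_mono) auto
      finally show "(real n / (1 - \<gamma>)) / c ^ D \<le> real n * (5 * real n / 2) * e2" .
    qed
    also have "\<dots> \<le> bnd"
    proof -
      have "\<gamma> ^ D \<le> e1" using gamma_pow_bound[OF x0 Dr] by (simp add: \<gamma>_def c_def e1_def)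
      hence "\<gamma> ^ D * real n \<le> e1 * real n" by (intro mult_right_mono) auto
      thus ?thesis unfolding bnd_def by (simp add: mult.commute)
    qed
    finally show ?thesis .
  qed
  have "measure_pmf.prob (bs_traj p q a (D + M))
       {ps. \<bar>real (Max ((\<lambda>k. num_piles (ps ! k)) ` K)) / (q * real n)\<bar> > \<epsilon>}
      \<le> measure_pmf.prob (bs_traj p q a (D + M)) (\<Union>k\<in>K. {ps. \<epsilon> * (q * real n) < real (num_piles (ps ! k))})"
    using sub by (intro measure_pmf.finite_measure_mono) auto
  also have "\<dots> \<le> (\<Sum>k\<in>K. measure_pmf.prob (bs_traj p q a (D + M)) {ps. \<epsilon> * (q * real n) < real (num_piles (ps ! k))})"
    by (intro measure_pmf.finite_measure_subadditive_finite) (auto simp: K_def)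
  also have "\<dots> \<le> (\<Sum>k\<in>K. bnd)" by (intro sum_mono each)
  also have "\<dots> = real M * bnd" by (simp add: K_def)
  also have "\<dots> \<le> (real n ^ 3 + 1) * bnd"
    using Mle by (intro mult_right_mono) (auto simp: bnd_def e1_def e2_def)
  also have "\<dots> = (real n ^ 3 + 1) * real n * exp (-(28/5) * ln (real n))
      + (real n ^ 3 + 1) * real n * (5 * real n / 2) * exp (-(21/4) * ln (real n))"
    by (simp add: bnd_def e1_def e2_def L_def algebra_simps)
  finally show ?thesis by (simp add: Let_def D_def M_def K_def)
qed



lemma bound_lim: "(\<lambda>n::nat. (real n ^ 3 + 1) * real n * exp (-(28/5) * ln (real n))
      + (real n ^ 3 + 1) * real n * (5 * real n / 2) * exp (-(21/4) * ln (real n))) \<longlonglongrightarrow> 0"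
  by real_asymp

lemma ln_ge1: "3 \<le> n \<Longrightarrow> 1 \<le> ln (real n)"
proof -
  assume "3 \<le> n"
  hence "exp 1 \<le> real n" using exp_le by linarith
  hence "ln (exp 1) \<le> ln (real n)" using \<open>3 \<le> n\<close> by (subst ln_le_cancel_iff) auto
  thus ?thesis by simp
qed

theorem lemma5:
  fixes p q :: "nat \<Rightarrow> real" and \<alpha>0 :: "nat \<Rightarrow> nat list"
  assumes "\<And>n. 0 < p n \<and> p n \<le> 1"
    and "\<And>n. 0 < q n \<and> q n \<le> 1"
    and "\<And>n. sum_list (\<alpha>0 n) = n \<and> (\<forall>h\<in>set (\<alpha>0 n). 0 < h)"
    and "filterlim (\<lambda>n. p n * (q n)\<^sup>2 * real n / ln (real n)) at_top at_top"
  shows "\<forall>\<epsilon>>0. (\<lambda>n. let D = nat \<lceil>14 * ln (real n) / (p n * q n)\<rceil>;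
                          M = nat \<lceil>(real n)\<^sup>2 / p n\<rceil> in
            measure_pmf.prob (bs_traj (p n) (q n) (\<alpha>0 n) (D + M))
              {ps. \<bar>real (Max ((\<lambda>k. num_piles (ps ! k)) ` {D + 1 .. D + M})) / (q n * real n)\<bar> > \<epsilon>})
          \<longlonglongrightarrow> 0"
proof (intro allI impI)
  fix \<epsilon> :: real assume \<epsilon>: "\<epsilon> > 0"
  define K where "K = max 1 (28 / \<epsilon>)"
  have ev: "eventually (\<lambda>n. K \<le> p n * (q n)\<^sup>2 * real n / ln (real n) \<and> 3 \<le> n) sequentially"
    using assms(4) by (intro eventually_conj) (auto simp: filterlim_at_top eventually_ge_at_top)
  have "eventually (\<lambda>n. (let D = nat \<lceil>14 * ln (real n) / (p n * q n)\<rceil>;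
                          M = nat \<lceil>(real n)\<^sup>2 / p n\<rceil> in
            measure_pmf.prob (bs_traj (p n) (q n) (\<alpha>0 n) (D + M))
              {ps. \<bar>real (Max ((\<lambda>k. num_piles (ps ! k)) ` {D + 1 .. D + M})) / (q n * real n)\<bar> > \<epsilon>})
      \<le> (real n ^ 3 + 1) * real n * exp (-(28/5) * ln (real n))
      + (real n ^ 3 + 1) * real n * (5 * real n / 2) * exp (-(21/4) * ln (real n))) sequentially"
    using ev
  proof eventually_elim
    case (elim n)
    have p: "0 < p n" "p n \<le> 1" and q: "0 < q n" "q n \<le> 1" using assms(1,2) by auto
    have L1: "1 \<le> ln (real n)" using elim ln_ge1 by auto
    have Lp: "0 < ln (real n)" using L1 by simp
    have "K * ln (real n) \<le> p n * (q n)\<^sup>2 * real n"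
      using elim Lp by (simp add: field_simps)
    hence big: "K * ln (real n) \<le> p n * q n * (q n * real n)" by (simp add: power2_eq_square algebra_simps)
    have K1: "1 \<le> K" "28 / \<epsilon> \<le> K" by (auto simp: K_def)
    have pqqn: "ln (real n) \<le> p n * q n * (q n * real n)"
    proof -
      have "1 * ln (real n) \<le> K * ln (real n)" using K1 Lp by (intro mult_right_mono) auto
      thus ?thesis using big by linarith
    qed
    have qn_le: "p n * q n * (q n * real n) \<le> q n * real n"
    proof -
      have "p n * q n \<le> 1" using p q by (simp add: mult_le_one)
      thus ?thesis using p q by (intro mult_left_le_one_le) auto
    qed
    have qn2: "p n * q n * (q n * real n) \<le> p n * q n * real n"
    proof -
      have "q n * real n \<le> real n" using q by (intro mult_left_le_one_le) auto
      thus ?thesis using p q by (intro mult_left_mono) auto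
    qed
    have x1: "1 \<le> p n * q n * real n" using pqqn qn2 L1 by linarith
    have e28: "28 * ln (real n) \<le> \<epsilon> * (p n * q n * (q n * real n))"
    proof -
      have "28 / \<epsilon> * ln (real n) \<le> K * ln (real n)" using K1 Lp by (intro mult_right_mono) auto
      hence "28 / \<epsilon> * ln (real n) \<le> p n * q n * (q n * real n)" using big by linarith
      thus ?thesis using \<epsilon> by (simp add: field_simps)
    qed
    have Dle: "real (nat \<lceil>14 * ln (real n) / (p n * q n)\<rceil>) \<le> \<epsilon> * (q n * real n)"
    proof -
      have pq0: "0 < p n * q n" using p q by simp
      have a0: "0 \<le> 14 * ln (real n) / (p n * q n)" using pq0 Lp by simp
      have "real (nat \<lceil>14 * ln (real n) / (p n * q n)\<rceil>) \<le> 14 * ln (real n) / (p n * q n) + 1"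
        using a0 by linarith
      also have "14 * ln (real n) / (p n * q n) \<le> \<epsilon> * (q n * real n) / 2"
        using e28 pq0 by (simp add: field_simps)
      also have "1 \<le> \<epsilon> * (q n * real n) / 2"
      proof -
        have "28 \<le> \<epsilon> * (p n * q n * (q n * real n))" using e28 L1 by linarith
        also have "\<dots> \<le> \<epsilon> * (q n * real n)" using qn_le \<epsilon> by (intro mult_left_mono) auto
        finally show ?thesis by simp
      qed
      finally show ?thesis by (simp add: mult.commute)
    qed
    show ?case
      using per_n[OF p q _ x1 \<epsilon> Dle, of "\<alpha>0 n"] assms(3)[of n] by simp
  qed
  moreover have "eventually (\<lambda>n. 0 \<le> (let D = nat \<lceil>14 * ln (real n) / (p n * q n)\<rceil>;
                          M = nat \<lceil>(real n)\<^sup>2 / p n\<rceil> in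
            measure_pmf.prob (bs_traj (p n) (q n) (\<alpha>0 n) (D + M))
              {ps. \<bar>real (Max ((\<lambda>k. num_piles (ps ! k)) ` {D + 1 .. D + M})) / (q n * real n)\<bar> > \<epsilon>})) sequentially"
    by (simp add: Let_def)
  ultimately show "(\<lambda>n. let D = nat \<lceil>14 * ln (real n) / (p n * q n)\<rceil>;
                          M = nat \<lceil>(real n)\<^sup>2 / p n\<rceil> in
            measure_pmf.prob (bs_traj (p n) (q n) (\<alpha>0 n) (D + M))
              {ps. \<bar>real (Max ((\<lambda>k. num_piles (ps ! k)) ` {D + 1 .. D + M})) / (q n * real n)\<bar> > \<epsilon>})
          \<longlonglongrightarrow> 0"
    by (intro tendsto_sandwich[OF _ _ tendsto_const bound_lim]) auto
qed

end
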